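(* Let $F\subset\mathbb R^d$ be a closed set such that $\partial\operatorname{conv}F$ contains no rays. Then $\operatorname{cl}\operatorname{conv}F=\operatorname{conv}F$.
   Context: $\operatorname{conv}$ denotes convex hull and $\operatorname{cl}$ closure. A ray is a set $\{x+te: t\ge0\}$ with $x\in\mathbb R^d$, $e\ne0$. *)

theory Defs
  imports "HOL-Analysis.Analysis"
begin

definition is_ray :: "'a::real_vector set \<Rightarrow> bool" where
  "is_ray R \<longleftrightarrow> (\<exists>x e. e \<noteq> 0 \<and> R = {x + t *\<^sub>R e | t. t \<ge> 0})"

end

theory Submission imports Defs "HOL-Real_Asymp.Real_Asymp" begin

lemma ray_lemma:
  fixes K :: "'a::euclidean_space set"
  assumes K: "closed K" "convex K" and xK: "x \<in> K"
    and sup: "\<And>y. y \<in> K \<Longrightarrow> a \<bullet> x \<le> a \<bullet> y"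
    and unb: "\<not> bounded (K \<inter> {y. a \<bullet> y \<le> \<beta>})"
  shows "\<exists>e. e \<noteq> 0 \<and> a \<bullet> e = 0 \<and> (\<forall>t\<ge>0. x + t *\<^sub>R e \<in> K)"
proof -
  have "\<exists>y. y \<in> K \<and> a \<bullet> y \<le> \<beta> \<and> norm (y - x) \<ge> real n + 1" for n :: nat
  proof -
    from unb obtain y where y: "y \<in> K \<inter> {y. a \<bullet> y \<le> \<beta>}" "norm y > norm x + real n + 1"
      unfolding bounded_iff by (meson not_le)
    have "norm y \<le> norm (y - x) + norm x" by (metis norm_triangle_sub add.commute)
    with y show ?thesis by auto
  qed
  then obtain y where y: "\<And>n. y n \<in> K" "\<And>n. a \<bullet> y n \<le> \<beta>" "\<And>n. norm (y n - x) \<ge> real n + 1"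
    by metis
  define u where "u n = (1 / norm (y n - x)) *\<^sub>R (y n - x)" for n
  have npos: "norm (y n - x) > 0" for n using y(3)[of n] by linarith
  have usph: "\<forall>n. u n \<in> sphere 0 1" using npos by (simp add: u_def)
  obtain e r where e: "e \<in> sphere 0 1" and r: "strict_mono r" and lim: "(u \<circ> r) \<longlonglongrightarrow> e"
    using seq_compactE[OF compact_imp_seq_compact[OF compact_sphere] usph] by metis
  have e0: "e \<noteq> 0" using e by auto
  have seg: "x + t *\<^sub>R u n \<in> K" if "0 \<le> t" "t \<le> real n" for t n
  proof -
    have s: "0 \<le> t / norm (y n - x)" "t / norm (y n - x) \<le> 1"
      using that npos[of n] y(3)[of n] by (auto simp: divide_simps)
    have "(1 - t / norm (y n - x)) *\<^sub>R x + (t / norm (y n - x)) *\<^sub>R y n \<in> K"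
      using convexD_alt[OF K(2) xK y(1)[of n] s] by simp
    moreover have "(1 - t / norm (y n - x)) *\<^sub>R x + (t / norm (y n - x)) *\<^sub>R y n = x + t *\<^sub>R u n"
      by (simp add: u_def algebra_simps)
    ultimately show ?thesis by simp
  qed
  have ray: "x + t *\<^sub>R e \<in> K" if t: "t \<ge> 0" for t
  proof (rule Lim_in_closed_set[OF K(1) _ trivial_limit_sequentially])
    show "((\<lambda>n. x + t *\<^sub>R (u \<circ> r) n) \<longlongrightarrow> x + t *\<^sub>R e) sequentially"
      by (intro tendsto_intros lim)
    obtain N :: nat where N: "t \<le> real N" using real_arch_simple by blast
    show "\<forall>\<^sub>F n in sequentially. x + t *\<^sub>R (u \<circ> r) n \<in> K"
    proof (rule eventually_sequentiallyI[of N])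
      fix n assume "N \<le> n"
      then have "real N \<le> real (r n)" using seq_suble[OF r, of n] by simp
      then show "x + t *\<^sub>R (u \<circ> r) n \<in> K" using seg[of t "r n"] t N by simp
    qed
  qed
  have ge: "a \<bullet> e \<ge> 0" using sup[OF ray[of 1]] by (simp add: inner_add_right)
  have le: "a \<bullet> e \<le> 0"
  proof -
    define M where "M = \<bar>\<beta> - a \<bullet> x\<bar>"
    have low: "M / (real (r n) + 1) \<ge> a \<bullet> (u \<circ> r) n" for n
    proof -
      have nn: "norm (y (r n) - x) \<ge> real (r n) + 1" using y(3) by simp
      have "a \<bullet> (y (r n) - x) \<le> M" using sup[OF y(1)] y(2)[of "r n"] 
        unfolding M_def by (simp add: inner_diff_right)
      have "a \<bullet> (u \<circ> r) n = (a \<bullet> (y (r n) - x)) / norm (y (r n) - x)"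
        by (simp add: u_def)
      also have "\<dots> \<le> M / norm (y (r n) - x)"
        using \<open>a \<bullet> (y (r n) - x) \<le> M\<close> npos by (simp add: divide_right_mono)
      also have "M / norm (y (r n) - x) \<le> M / (real (r n) + 1)"
        using nn M_def by (simp add: frac_le)
      finally show ?thesis by simp
    qed
    have l0: "(\<lambda>n. M / (real (r n) + 1)) \<longlonglongrightarrow> 0"
    proof -
      have "(\<lambda>n. M / (real n + 1)) \<longlonglongrightarrow> 0"
        by real_asymp
      then show ?thesis using LIMSEQ_subseq_LIMSEQ[OF _ r] by (simp add: o_def)
    qed
    have "(\<lambda>n. a \<bullet> (u \<circ> r) n) \<longlonglongrightarrow> a \<bullet> e" by (intro tendsto_intros lim)
    then show ?thesis using l0 low by (intro tendsto_le[OF trivial_limit_sequentially, of _ 0]) auto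
  qed
  show ?thesis using e0 le ge ray by (intro exI[of _ e]) auto
qed

lemma near_lemma:
  fixes K C F :: "'a::euclidean_space set"
  assumes C: "C = convex hull F" and KC: "C \<subseteq> K" and Kc: "convex K"
    and sup: "\<And>y. y \<in> K \<Longrightarrow> \<alpha> \<le> a \<bullet> y"
    and R: "\<And>y. y \<in> K \<Longrightarrow> a \<bullet> y \<le> \<alpha> + 2 \<Longrightarrow> norm y \<le> R"
    and c: "c \<in> C" "a \<bullet> c \<le> \<alpha> + \<epsilon>" "0 \<le> \<epsilon>" "\<epsilon> < 1"
  shows "\<exists>q \<in> convex hull (F \<inter> {y. a \<bullet> y \<le> \<alpha> + 1}). norm (c - q) \<le> 2 * R * \<epsilon>"
proof -
  define N where "N = F \<inter> {y. a \<bullet> y \<le> \<alpha> + 1}"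
  define P where "P = F \<inter> {y. a \<bullet> y > \<alpha> + 1}"
  have FNP: "F = N \<union> P" unfolding N_def P_def by auto
  have cNP: "convex hull N \<subseteq> {y. a \<bullet> y \<le> \<alpha> + 1}"
    by (rule hull_minimal) (auto simp: N_def convex_halfspace_le)
  have cPP: "convex hull P \<subseteq> {y. a \<bullet> y > \<alpha> + 1}"
    by (rule hull_minimal) (auto simp: P_def convex_halfspace_gt)
  have NK: "convex hull N \<subseteq> K" "convex hull P \<subseteq> K"
    using KC C hull_mono[of N F] hull_mono[of P F] unfolding N_def P_def by blast+
  have R0: "0 \<le> R"
  proof -
    have "c \<in> K" using c KC by auto
    then show ?thesis using R[of c] c by (smt (verit) norm_ge_zero)
  qed
  show ?thesis
  proof (cases "P = {}")
    case True
    then have "c \<in> convex hull N" using c C FNP by simp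
    then show ?thesis using R0 c by (intro bexI[of _ c]) (auto simp: N_def)
  next
    case Pne: False
    show ?thesis
    proof (cases "N = {}")
      case True
      then have "c \<in> convex hull P" using c C FNP by simp
      then have False using cPP c by auto
      then show ?thesis ..
    next
      case Nne: False
      have "c \<in> convex hull (convex hull N \<union> convex hull P)"
        using c C FNP hull_Un[of convex N P] convex_Inter by (metis convex_convex_hull)
      then obtain u v q p where uv: "u \<ge> 0" "v \<ge> 0" "u + v = 1" and q: "q \<in> convex hull N"
        and p: "p \<in> convex hull P" and cq: "c = u *\<^sub>R q + v *\<^sub>R p"
        using convex_hull_union_two[of "convex hull N" "convex hull P"] Nne Pne by auto
      have qK: "q \<in> K" and pK: "p \<in> K" using q p NK by auto
      have aq: "a \<bullet> q \<le> \<alpha> + 1" "a \<bullet> q \<ge> \<alpha>" using cNP q sup[OF qK] by auto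
      have ap: "a \<bullet> p > \<alpha> + 1" using cPP p by auto
      have nq: "norm q \<le> R" using R[OF qK] aq by simp
      have "u *\<^sub>R q + v *\<^sub>R q = q" using uv by (metis scaleR_add_left scaleR_one)
      then have cdiff: "c - q = v *\<^sub>R (p - q)" using cq by (simp add: algebra_simps)
      define g where "g = a \<bullet> p - a \<bullet> q"
      have gpos: "g > 0" using aq ap g_def by simp
      have "a \<bullet> (c - q) = v * g" using cdiff g_def by (simp add: inner_diff_right)
      then have ac: "a \<bullet> c = a \<bullet> q + v * g" by (simp add: inner_diff_right)
      have vg: "v * g \<le> \<epsilon>" using ac c aq by simp
      show ?thesis
      proof (cases "g \<le> 1")
        case True
        have "norm p \<le> R" using R[OF pK] aq g_def True by simp
        then have npq: "norm (p - q) \<le> 2 * R" using nq norm_triangle_ineq4[of p q] by simp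
        have v: "v \<le> \<epsilon>"
        proof -
          have "a \<bullet> c = u * (a \<bullet> q) + v * (a \<bullet> p)" using cq by (simp add: inner_add_right)
          moreover have "u * (a \<bullet> q) \<ge> u * \<alpha>" using uv aq by (simp add: mult_left_mono)
          moreover have "v * (a \<bullet> p) \<ge> v * (\<alpha> + 1)" using uv ap by (simp add: mult_left_mono)
          ultimately have "a \<bullet> c \<ge> (u + v) * \<alpha> + v" by (simp add: algebra_simps)
          then show ?thesis using uv c by simp
        qed
        have "norm (c - q) = v * norm (p - q)" using cdiff uv by simp
        also have "\<dots> \<le> \<epsilon> * (2 * R)" using v npq uv c by (intro mult_mono) auto
        finally show ?thesis using q by (auto simp: N_def mult.commute mult.left_commute)
      next
        case False
        define w where "w = q + (1 / g) *\<^sub>R (p - q)"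
        have "w = (1 - 1/g) *\<^sub>R q + (1/g) *\<^sub>R p" by (simp add: w_def algebra_simps)
        moreover have "(1 - 1/g) *\<^sub>R q + (1/g) *\<^sub>R p \<in> K"
          using False gpos by (intro convexD_alt[OF Kc qK pK]) auto
        ultimately have wK: "w \<in> K" by simp
        have aw: "a \<bullet> w = a \<bullet> q + 1" using gpos
          by (simp add: w_def inner_add_right inner_diff_right g_def)
        have nw: "norm w \<le> R" using R[OF wK] aw aq by simp
        have "norm (w - q) \<le> 2 * R" using nw nq norm_triangle_ineq4[of w q] by simp
        then have npq: "norm (p - q) / g \<le> 2 * R" using gpos by (simp add: w_def)
        have "norm (c - q) = (v * g) * (norm (p - q) / g)" using cdiff uv gpos by simp
        also have "\<dots> \<le> \<epsilon> * (2 * R)" using vg npq uv gpos c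
          by (intro mult_mono) auto
        finally show ?thesis using q by (auto simp: N_def mult.commute mult.left_commute)
      qed
    qed
  qed
qed


theorem mainTheorem4:
  fixes F :: "'a::euclidean_space set"
  assumes "closed F"
    and "\<not> (\<exists>R. is_ray R \<and> R \<subseteq> frontier (convex hull F))"
  shows "closure (convex hull F) = convex hull F"
proof (rule ccontr)
  define C where "C = convex hull F"
  define K where "K = closure C"
  assume "closure (convex hull F) \<noteq> convex hull F"
  then obtain x where xK: "x \<in> K" and xC: "x \<notin> C"
    using closure_subset unfolding C_def K_def by blast
  have Cc: "convex C" unfolding C_def by simp
  have Kc: "convex K" "closed K" unfolding K_def using Cc by (auto simp: convex_closure)
  have CK: "C \<subseteq> K" unfolding K_def by (rule closure_subset)
  have "x \<notin> rel_interior C" using xC rel_interior_subset by blast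
  then obtain a where a0: "a \<noteq> 0" and sup: "\<And>y. y \<in> K \<Longrightarrow> a \<bullet> x \<le> a \<bullet> y"
    using supporting_hyperplane_relative_frontier[OF Cc] xK unfolding K_def by metis
  define \<alpha> where "\<alpha> = a \<bullet> x"
  have bnd: "bounded (K \<inter> {y. a \<bullet> y \<le> \<beta>})" for \<beta>
  proof (rule ccontr)
    assume "\<not> bounded (K \<inter> {y. a \<bullet> y \<le> \<beta>})"
    from ray_lemma[OF Kc(2) Kc(1) xK sup this] obtain e where
      e: "e \<noteq> 0" "a \<bullet> e = 0" "\<And>t. t \<ge> 0 \<Longrightarrow> x + t *\<^sub>R e \<in> K" by blast
    define R where "R = {x + t *\<^sub>R e | t. t \<ge> 0}"
    have "is_ray R" unfolding is_ray_def R_def using e(1) by blast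
    moreover have "R \<subseteq> frontier C"
    proof
      fix z assume "z \<in> R"
      then obtain t where t: "t \<ge> 0" "z = x + t *\<^sub>R e" unfolding R_def by blast
      have zK: "z \<in> K" using e(3) t by simp
      have az: "a \<bullet> z = \<alpha>" using t e(2) by (simp add: \<alpha>_def inner_add_right)
      have "z \<notin> interior C"
      proof
        assume "z \<in> interior C"
        then obtain \<epsilon> where \<epsilon>: "\<epsilon> > 0" "ball z \<epsilon> \<subseteq> C" using mem_interior by metis
        define w where "w = z - (\<epsilon> / 2 / norm a) *\<^sub>R a"
        have "dist z w = \<epsilon> / 2" using \<epsilon> a0 by (simp add: w_def dist_norm)
        then have "w \<in> ball z \<epsilon>" using \<epsilon> by simp
        then have "w \<in> K" using \<epsilon> CK by blast
        moreover have "a \<bullet> w = \<alpha> - \<epsilon> / 2 * norm a"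
          proof -
          have aa: "a \<bullet> a = norm a * norm a" by (simp add: dot_square_norm power2_eq_square)
          have "a \<bullet> w = a \<bullet> z - (\<epsilon> / 2 / norm a) * (a \<bullet> a)" by (simp add: w_def inner_diff_right)
          also have "\<dots> = \<alpha> - \<epsilon> / 2 * norm a" using a0 az aa by simp
          finally show ?thesis .
        qed
        moreover have "\<epsilon> / 2 * norm a > 0" using \<epsilon> a0 by simp
        ultimately show False using sup[of w] unfolding \<alpha>_def by linarith
      qed
      then show "z \<in> frontier C" using zK unfolding frontier_def K_def by blast
    qed
    ultimately have "is_ray R \<and> R \<subseteq> frontier (convex hull F)" by (simp add: C_def)
    then show False using assms(2) by blast
  qed
  obtain R where R: "\<And>y. y \<in> K \<Longrightarrow> a \<bullet> y \<le> \<alpha> + 2 \<Longrightarrow> norm y \<le> R"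
    using bnd[of "\<alpha> + 2"] unfolding bounded_iff by blast
  have "norm x \<le> R" using R[OF xK] by (simp add: \<alpha>_def)
  then have R0: "R \<ge> 0" using norm_ge_zero[of x] by linarith
  define D where "D = convex hull (F \<inter> {y. a \<bullet> y \<le> \<alpha> + 1})"
  have "F \<subseteq> C" unfolding C_def by (rule hull_subset)
  then have "F \<subseteq> K" using CK by (rule order_trans)
  then have "bounded (F \<inter> {y. a \<bullet> y \<le> \<alpha> + 1})"
    using bounded_subset[OF bnd[of "\<alpha> + 1"], of "F \<inter> {y. a \<bullet> y \<le> \<alpha> + 1}"] by auto
  moreover have "closed (F \<inter> {y. a \<bullet> y \<le> \<alpha> + 1})"
    by (rule closed_Int[OF assms(1) closed_halfspace_le])
  ultimately have "compact D" unfolding D_def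
    by (intro compact_convex_hull) (simp add: compact_eq_bounded_closed)
  then have Dcl: "closed D" by (rule compact_imp_closed)
  have "x \<in> closure D"
    unfolding closure_approachable
  proof (intro allI impI)
    fix \<eta> :: real assume \<eta>: "\<eta> > 0"
    define \<eta>' where "\<eta>' = min (1 / (norm a + 1)) (\<eta> / (1 + 2 * R * norm a))"
    have pos: "1 + 2 * R * norm a > 0" using R0 by (simp add: add_pos_nonneg)
    have \<eta>'0: "\<eta>' > 0" unfolding \<eta>'_def using \<eta> pos norm_ge_zero[of a] by (simp add: add_pos_nonneg add_nonneg_pos)
    obtain c where c: "c \<in> C" "dist c x < \<eta>'"
      using xK \<eta>'0 unfolding K_def closure_approachable by blast
    define \<epsilon> where "\<epsilon> = norm a * dist c x"
    have "a \<bullet> (c - x) \<le> norm a * norm (c - x)" by (rule norm_cauchy_schwarz[THEN order_trans]) simp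
    then have ac: "a \<bullet> c \<le> \<alpha> + \<epsilon>" by (simp add: \<epsilon>_def \<alpha>_def dist_norm inner_diff_right)
    have e0: "0 \<le> \<epsilon>" by (simp add: \<epsilon>_def)
    have "\<epsilon> \<le> norm a * \<eta>'" using c(2) by (simp add: \<epsilon>_def mult_left_mono)
    also have "\<dots> \<le> norm a * (1 / (norm a + 1))" by (intro mult_left_mono) (auto simp: \<eta>'_def)
    also have "\<dots> < 1" using norm_ge_zero[of a] by (simp add: divide_simps, linarith)
    finally have e1: "\<epsilon> < 1" .
    obtain q where q: "q \<in> D" "norm (c - q) \<le> 2 * R * \<epsilon>"
      using near_lemma[OF C_def CK Kc(1) _ R c(1) ac e0 e1] sup unfolding D_def \<alpha>_def by blast
    have "dist q x \<le> dist c x + norm (c - q)" by (metis dist_norm dist_triangle2 dist_commute)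
    also have "\<dots> \<le> (1 + 2 * R * norm a) * dist c x"
      using q(2) by (simp add: \<epsilon>_def algebra_simps)
    also have "\<dots> < (1 + 2 * R * norm a) * \<eta>'" using c(2) pos by simp
    also have "\<dots> \<le> (1 + 2 * R * norm a) * (\<eta> / (1 + 2 * R * norm a))"
      using pos unfolding \<eta>'_def by (intro mult_left_mono) auto
    also have "\<dots> = \<eta>" using pos by simp
    finally show "\<exists>y\<in>D. dist y x < \<eta>" using q(1) by blast
  qed
  then have "x \<in> D" using Dcl closure_closed by metis
  moreover have "D \<subseteq> C" unfolding D_def C_def by (rule hull_mono) blast
  ultimately show False using xC by blast
qed

end
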